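(* Let $F:\mathcal{P}(V,A)\to 2^A\setminus\{\emptyset\}$ be a committee selection rule satisfying SPO and SPP. Let $P$ be a profile, $i$ a voter, $W=F(P)$, $s=\mathrm{best}(P_i,W)$, $b=\mathrm{worst}(P_i,W)$, and let $W'=F(P^{i\uparrow s})$. Then (1) $\mathrm{best}(P_i^{\uparrow s},W')=s$, and (2) $\mathrm{worst}(P_i^{\uparrow s},W')=b$.
   Context: $V$ is a finite nonempty set of voters, $A$ a finite set of alternatives; a profile $P$ assigns to each voter $i$ a linear order $P_i$ on $A$ (strict part $\succ_i$, weak part $\succeq_i$); $P_i'P_{-i}$ replaces voter $i$'s order by $P_i'$. A committee selection rule maps each profile to a nonempty subset of $A$. $\mathrm{best}(P_i,W)$, $\mathrm{worst}(P_i,W)$ are the $P_i$-best and $P_i$-worst elements of nonempty $W\subseteq A$. SPO: for all $P$, $i$, $P_i'$, $\mathrm{best}(P_i,F(P))\succeq_i\mathrm{best}(P_i,F(P_i'P_{-i}))$; SPP: same with $\mathrm{worst}$. $P_i^{\uparrow s}$ is the linear order obtained from $P_i$ by swapping $s$ with the alternative directly above it (no change if $s$ is already ranked first), and $P^{i\uparrow s}$ is the profile obtained from $P$ by replacing $P_i$ with $P_i^{\uparrow s}$. *)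

theory Defs
  imports Main
begin

text \<open>A linear order on the finite set A is represented as a ranking list:
  a duplicate-free list enumerating A, first element = most preferred.\<close>

definition ranking :: "'a set \<Rightarrow> 'a list \<Rightarrow> bool" where
  "ranking A r \<longleftrightarrow> distinct r \<and> set r = A"

definition weak_pref :: "'a list \<Rightarrow> 'a \<Rightarrow> 'a \<Rightarrow> bool" where
  "weak_pref r x y \<longleftrightarrow> (\<exists>j k. j \<le> k \<and> k < length r \<and> r ! j = x \<and> r ! k = y)"

definition best :: "'a list \<Rightarrow> 'a set \<Rightarrow> 'a" where
  "best r W = (THE x. x \<in> W \<and> (\<forall>y\<in>W. weak_pref r x y))"

definition worst :: "'a list \<Rightarrow> 'a set \<Rightarrow> 'a" where
  "worst r W = (THE x. x \<in> W \<and> (\<forall>y\<in>W. weak_pref r y x))"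

definition is_profile :: "'v set \<Rightarrow> 'a set \<Rightarrow> ('v \<Rightarrow> 'a list) \<Rightarrow> bool" where
  "is_profile V A P \<longleftrightarrow> (\<forall>i\<in>V. ranking A (P i))"

definition committee_rule ::
  "'v set \<Rightarrow> 'a set \<Rightarrow> (('v \<Rightarrow> 'a list) \<Rightarrow> 'a set) \<Rightarrow> bool" where
  "committee_rule V A F \<longleftrightarrow> (\<forall>P. is_profile V A P \<longrightarrow> F P \<noteq> {} \<and> F P \<subseteq> A)"

definition SPO :: "'v set \<Rightarrow> 'a set \<Rightarrow> (('v \<Rightarrow> 'a list) \<Rightarrow> 'a set) \<Rightarrow> bool" where
  "SPO V A F \<longleftrightarrow> (\<forall>P i r. is_profile V A P \<longrightarrow> i \<in> V \<longrightarrow> ranking A r \<longrightarrow>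
      weak_pref (P i) (best (P i) (F P)) (best (P i) (F (P(i := r)))))"

definition SPP :: "'v set \<Rightarrow> 'a set \<Rightarrow> (('v \<Rightarrow> 'a list) \<Rightarrow> 'a set) \<Rightarrow> bool" where
  "SPP V A F \<longleftrightarrow> (\<forall>P i r. is_profile V A P \<longrightarrow> i \<in> V \<longrightarrow> ranking A r \<longrightarrow>
      weak_pref (P i) (worst (P i) (F P)) (worst (P i) (F (P(i := r)))))"

definition up :: "'a list \<Rightarrow> 'a \<Rightarrow> 'a list" where
  "up r s = (let k = (LEAST k. k < length r \<and> r ! k = s) in
      if s \<notin> set r \<or> k = 0 then r else r[k - 1 := s, k := r ! (k - 1)])"

end

theory Submission
  imports Defs
begin

definition pos :: "'a list \<Rightarrow> 'a \<Rightarrow> nat" where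
  "pos r x = (LEAST k. k < length r \<and> r ! k = x)"

lemma pos_nth: assumes "distinct r" "k < length r" shows "pos r (r ! k) = k"
proof -
  have "(LEAST j. j < length r \<and> r ! j = r ! k) = k"
    apply (rule Least_equality)
    using assms by (auto simp: nth_eq_iff_index_eq)
  thus ?thesis by (simp add: pos_def)
qed

lemma pos_in: assumes "x \<in> set r" shows "pos r x < length r \<and> r ! pos r x = x"
proof -
  obtain k where "k < length r" "r ! k = x" using assms by (auto simp: in_set_conv_nth)
  hence "pos r x < length r \<and> r ! pos r x = x" unfolding pos_def
    by (metis (mono_tags, lifting) LeastI)
  thus ?thesis .
qed

lemma pos_inj: assumes "x \<in> set r" "y \<in> set r" "pos r x = pos r y" shows "x = y"
  using pos_in[OF assms(1)] pos_in[OF assms(2)] assms(3) by metis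

lemma weak_pref_pos: assumes "distinct r"
  shows "weak_pref r x y \<longleftrightarrow> x \<in> set r \<and> y \<in> set r \<and> pos r x \<le> pos r y"
proof
  assume "weak_pref r x y"
  then obtain j k where "j \<le> k" "k < length r" "r ! j = x" "r ! k = y"
    by (auto simp: weak_pref_def)
  thus "x \<in> set r \<and> y \<in> set r \<and> pos r x \<le> pos r y"
    using pos_nth[OF assms, of j] pos_nth[OF assms, of k] by auto
next
  assume "x \<in> set r \<and> y \<in> set r \<and> pos r x \<le> pos r y"
  thus "weak_pref r x y" using pos_in[of x r] pos_in[of y r]
    unfolding weak_pref_def by blast
qed

lemma best_eq: assumes "distinct r" "W \<subseteq> set r" "x \<in> W" "\<forall>y\<in>W. pos r x \<le> pos r y"
  shows "best r W = x"
  unfolding best_def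
proof (rule the_equality)
  show "x \<in> W \<and> (\<forall>y\<in>W. weak_pref r x y)"
    using assms by (auto simp: weak_pref_pos)
next
  fix z assume "z \<in> W \<and> (\<forall>y\<in>W. weak_pref r z y)"
  thus "z = x" using assms pos_inj[of z r x]
    by (auto simp: weak_pref_pos) (meson le_antisym subsetD)
qed

lemma worst_eq: assumes "distinct r" "W \<subseteq> set r" "x \<in> W" "\<forall>y\<in>W. pos r y \<le> pos r x"
  shows "worst r W = x"
  unfolding worst_def
proof (rule the_equality)
  show "x \<in> W \<and> (\<forall>y\<in>W. weak_pref r y x)"
    using assms by (auto simp: weak_pref_pos)
next
  fix z assume "z \<in> W \<and> (\<forall>y\<in>W. weak_pref r y z)"
  thus "z = x" using assms pos_inj[of z r x]
    by (auto simp: weak_pref_pos) (meson le_antisym subsetD)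
qed

lemma best_char: assumes "distinct r" "W \<subseteq> set r" "W \<noteq> {}"
  shows "best r W \<in> W \<and> (\<forall>y\<in>W. pos r (best r W) \<le> pos r y)"
proof -
  have fin: "finite W" using assms(2) finite_subset by blast
  have "Min (pos r ` W) \<in> pos r ` W" using fin assms(3) by (intro Min_in) auto
  then obtain x where x: "x \<in> W" "pos r x = Min (pos r ` W)" by auto
  have "\<forall>y\<in>W. pos r x \<le> pos r y" using x fin by simp
  moreover hence "best r W = x" by (rule best_eq[OF assms(1,2) x(1)])
  ultimately show ?thesis using x by simp
qed

lemma worst_char: assumes "distinct r" "W \<subseteq> set r" "W \<noteq> {}"
  shows "worst r W \<in> W \<and> (\<forall>y\<in>W. pos r y \<le> pos r (worst r W))"
proof -
  have fin: "finite W" using assms(2) finite_subset by blast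
  have "Max (pos r ` W) \<in> pos r ` W" using fin assms(3) by (intro Max_in) auto
  then obtain x where x: "x \<in> W" "pos r x = Max (pos r ` W)" by auto
  have "\<forall>y\<in>W. pos r y \<le> pos r x" using x fin by simp
  moreover hence "worst r W = x" by (rule worst_eq[OF assms(1,2) x(1)])
  ultimately show ?thesis using x by simp
qed

lemma up_zero: assumes "pos r s = 0" shows "up r s = r"
  using assms by (simp add: up_def pos_def Let_def)

lemma up_props:
  assumes "distinct r" "s \<in> set r" "pos r s = k" "k > 0"
  shows "distinct (up r s) \<and> set (up r s) = set r \<and>
    (\<forall>x\<in>set r. pos (up r s) x = (if pos r x = k then k - 1 else if pos r x = k - 1 then k else pos r x))"
proof -
  have kl: "k < length r" "r ! k = s" using pos_in[OF assms(2)] assms(3) by auto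
  define r' where "r' = r[k - 1 := s, k := r ! (k - 1)]"
  have up: "up r s = r'" using assms unfolding up_def r'_def pos_def Let_def by auto
  have len: "length r' = length r" by (simp add: r'_def)
  define sw where "sw j = (if j = k then k - 1 else if j = k - 1 then k else j)" for j
  have nth: "\<And>j. j < length r \<Longrightarrow> r' ! j = r ! sw j"
    using kl assms(4) by (auto simp: r'_def sw_def nth_list_update)
  have swl: "\<And>j. j < length r \<Longrightarrow> sw j < length r" using kl by (auto simp: sw_def)
  have swinj: "\<And>i j. sw i = sw j \<Longrightarrow> i = j" using assms(4) by (auto simp: sw_def split: if_splits)
  have dist: "distinct r'"
    unfolding distinct_conv_nth len
  proof (intro allI impI)
    fix i j assume "i < length r" "j < length r" "i \<noteq> j"
    thus "r' ! i \<noteq> r' ! j" using nth swl swinj assms(1) by (metis nth_eq_iff_index_eq)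
  qed
  have set: "set r' = set r" unfolding r'_def using kl assms(4)
    by (metis set_swap less_imp_diff_less)
  have "\<forall>x\<in>set r. pos r' x = sw (pos r x)"
  proof
    fix x assume x: "x \<in> set r"
    have p: "pos r x < length r" "r ! pos r x = x" using pos_in[OF x] by auto
    have "sw (sw (pos r x)) = pos r x" by (auto simp: sw_def)
    hence "r' ! sw (pos r x) = x" using nth[OF swl[OF p(1)]] p by simp
    thus "pos r' x = sw (pos r x)" using pos_nth[OF dist, of "sw (pos r x)"] swl[OF p(1)] len by simp
  qed
  thus ?thesis using dist set up by (simp add: sw_def)
qed

theorem lemma8:
  fixes V :: "'v set" and A :: "'a set" and F :: "('v \<Rightarrow> 'a list) \<Rightarrow> 'a set"
    and P :: "'v \<Rightarrow> 'a list" and i :: 'v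
  assumes "finite V" and "V \<noteq> {}" and "finite A"
    and "committee_rule V A F"
    and "SPO V A F" and "SPP V A F"
    and "is_profile V A P" and "i \<in> V"
  shows "let W = F P; s = best (P i) W; b = worst (P i) W;
             W' = F (P(i := up (P i) s))
         in best (up (P i) s) W' = s \<and> worst (up (P i) s) W' = b"
proof -
  define r where "r = P i"
  define W where "W = F P"
  define s where "s = best r W"
  define b where "b = worst r W"
  have rk: "ranking A r" using assms(7,8) by (auto simp: is_profile_def r_def)
  hence dr: "distinct r" and sr: "set r = A" by (auto simp: ranking_def)
  have WA: "W \<subseteq> set r" "W \<noteq> {}" using assms(4,7) sr by (auto simp: committee_rule_def W_def)
  note bc = best_char[OF dr WA, folded s_def]
  note wc = worst_char[OF dr WA, folded b_def]
  have sin: "s \<in> set r" using bc WA by auto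
  define k where "k = pos r s"
  show ?thesis
  proof (cases "k = 0")
    case True
    hence "up r s = r" using up_zero k_def by metis
    hence "P(i := up r s) = P" by (simp add: r_def)
    thus ?thesis by (simp add: Let_def r_def[symmetric] W_def[symmetric] s_def[symmetric] b_def[symmetric] \<open>up r s = r\<close>)
  next
    case False
    define r' where "r' = up r s"
    note U = up_props[OF dr sin k_def[symmetric], folded r'_def] False
    have dr': "distinct r'" and sr': "set r' = set r" using U by auto
    have pf: "\<And>x. x \<in> set r \<Longrightarrow> pos r' x = (if pos r x = k then k - 1 else if pos r x = k - 1 then k else pos r x)"
      using U by auto
    define P' where "P' = P(i := r')"
    have rk': "ranking A r'" using dr' sr' sr by (simp add: ranking_def)
    have prof': "is_profile V A P'" using assms(7) rk' by (simp add: is_profile_def P'_def)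
    have bk: "P'(i := r) = P" by (simp add: P'_def r_def)
    define W' where "W' = F P'"
    have WA': "W' \<subseteq> set r" "W' \<noteq> {}" using assms(4) prof' sr by (auto simp: committee_rule_def W'_def)
    have WA'': "W' \<subseteq> set r'" using WA' sr' by auto
    have WAr': "W \<subseteq> set r'" using WA sr' by auto
    have inW: "\<And>y. y \<in> W \<Longrightarrow> k \<le> pos r y" using bc k_def by auto
    have inj: "\<And>x y. x \<in> set r \<Longrightarrow> y \<in> set r \<Longrightarrow> pos r x = pos r y \<Longrightarrow> x = y"
      using pos_inj by metis
    have inj': "\<And>x y. x \<in> set r \<Longrightarrow> y \<in> set r \<Longrightarrow> pos r' x = pos r' y \<Longrightarrow> x = y"
      using pos_inj sr' by metis
    have bW: "b \<in> W" using wc by auto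
    have sW: "s \<in> W" using bc by auto
    have bs': "best r' W = s"
    proof (rule best_eq[OF dr' WAr' sW], intro ballI)
      fix y assume y: "y \<in> W"
      have "y \<in> set r" using y WA by auto
      thus "pos r' s \<le> pos r' y" using pf[OF sin] pf[of y] inW[OF y] k_def by auto
    qed
    have bw': "worst r' W = b"
    proof (rule worst_eq[OF dr' WAr' bW], intro ballI)
      fix y assume y: "y \<in> W"
      have "y \<in> set r" "b \<in> set r" using y bW WA by auto
      thus "pos r' y \<le> pos r' b" using pf[of b] pf[of y] inW[OF y] inW[OF bW] wc y k_def
        by auto
    qed
    have HO: "\<And>Q j q. is_profile V A Q \<Longrightarrow> j \<in> V \<Longrightarrow> ranking A q \<Longrightarrow>
        weak_pref (Q j) (best (Q j) (F Q)) (best (Q j) (F (Q(j := q))))"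
      using assms(5) unfolding SPO_def by blast
    have HP: "\<And>Q j q. is_profile V A Q \<Longrightarrow> j \<in> V \<Longrightarrow> ranking A q \<Longrightarrow>
        weak_pref (Q j) (worst (Q j) (F Q)) (worst (Q j) (F (Q(j := q))))"
      using assms(6) unfolding SPP_def by blast
    have P'i: "P' i = r'" by (simp add: P'_def)
    have spo1: "weak_pref r s (best r W')"
      using HO[OF assms(7,8) rk'] unfolding r_def[symmetric] W_def[symmetric] s_def[symmetric]
        P'_def[symmetric] W'_def[symmetric] .
    have spo2: "weak_pref r' (best r' W') s"
      using HO[OF prof' assms(8) rk] unfolding P'i bk W_def[symmetric] bs' W'_def[symmetric] .
    have spp1: "weak_pref r b (worst r W')"
      using HP[OF assms(7,8) rk'] unfolding r_def[symmetric] W_def[symmetric] b_def[symmetric]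
        P'_def[symmetric] W'_def[symmetric] .
    have spp2: "weak_pref r' (worst r' W') b"
      using HP[OF prof' assms(8) rk] unfolding P'i bk W_def[symmetric] bw' W'_def[symmetric] .
    note bc1 = best_char[OF dr WA']
    note bc2 = best_char[OF dr' WA'' WA'(2)]
    note wc1 = worst_char[OF dr WA']
    note wc2 = worst_char[OF dr' WA'' WA'(2)]
    have res1: "best r' W' = s"
    proof -
      define x where "x = best r' W'"
      have xin: "x \<in> W'" "x \<in> set r" using bc2 WA' x_def by auto
      have "pos r' x \<le> pos r' s" using spo2 dr' x_def by (simp add: weak_pref_pos)
      moreover have "k \<le> pos r (best r W')" using spo1 dr k_def by (simp add: weak_pref_pos)
      moreover have "pos r (best r W') \<le> pos r x" using bc1 xin by auto
      ultimately have "pos r x = k" using pf[OF xin(2)] pf[OF sin] k_def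
        by (auto split: if_splits)
      thus ?thesis using inj[OF xin(2) sin] k_def x_def by simp
    qed
    have res2: "worst r' W' = b"
    proof -
      define y where "y = worst r' W'"
      define z where "z = worst r W'"
      have yin: "y \<in> W'" "y \<in> set r" using wc2 WA' y_def by auto
      have zin: "z \<in> W'" "z \<in> set r" using wc1 WA' z_def by auto
      have bin: "b \<in> set r" using bW WA by auto
      have 1: "pos r' y \<le> pos r' b" using spp2 dr' y_def by (simp add: weak_pref_pos)
      have 2: "pos r b \<le> pos r z" using spp1 dr z_def by (simp add: weak_pref_pos)
      have 3: "pos r' z \<le> pos r' y" using wc2 zin y_def by auto
      have 4: "k \<le> pos r b" using inW[OF bW] .
      have "pos r z = pos r b"
        using 1 2 3 4 pf[OF zin(2)] pf[OF yin(2)] pf[OF bin] by (auto split: if_splits)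
      hence "z = b" using inj[OF zin(2) bin] by simp
      hence "b \<in> W'" using zin by simp
      hence "pos r' b \<le> pos r' y" using wc2 y_def by auto
      hence "pos r' y = pos r' b" using 1 by simp
      thus ?thesis using inj'[OF yin(2) bin] y_def by simp
    qed
    show ?thesis using res1 res2
      by (simp add: Let_def r_def[symmetric] W_def[symmetric] s_def[symmetric] b_def[symmetric]
          r'_def[symmetric] P'_def[symmetric] W'_def[symmetric])
  qed
qed

end
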